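(* Let $X$ be a separable Banach space, $X\ne\{0\}$, and let $E_X$, $(e^X_n)$, $Q_X$ be as in the context. Let $(v_k)$ be a bounded block sequence of $(e^X_n)$. If $(Q_X(v_k))$ is weakly null in $X$, then $(v_k)$ is weakly null in $E_X$.
   Context: Given a separable Banach space $X\neq\{0\}$ and a sequence $(x_n)$ (repetitions allowed) in the unit sphere of $X$ which is norm dense in the unit sphere, $E_X$ is the completion of $c_{00}(\mathbb{N})$ under the norm $\|z\|_{E_X}=\sup_{m\in\mathbb{N}}\|\sum_{n=0}^m z(n)x_n\|_X$; $(e^X_n)$ is the standard unit vector basis of $c_{00}(\mathbb{N})$ viewed in $E_X$ (a normalized monotone Schauder basis of $E_X$); $Q_X:E_X\to X$ is the unique bounded linear operator with $Q_X(e^X_n)=x_n$. *)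

theory Defs
  imports "HOL-Analysis.Analysis"
begin

definition c00 :: "(nat \<Rightarrow> real) set" where
  "c00 = {z. finite {n. z n \<noteq> 0}}"

definition EX_norm :: "(nat \<Rightarrow> 'a::real_normed_vector) \<Rightarrow> (nat \<Rightarrow> real) \<Rightarrow> real" where
  "EX_norm x z = (SUP m. norm (\<Sum>n\<le>m. z n *\<^sub>R x n))"

definition QX :: "(nat \<Rightarrow> 'a::real_normed_vector) \<Rightarrow> (nat \<Rightarrow> real) \<Rightarrow> 'a" where
  "QX x z = (\<Sum>n\<in>{n. z n \<noteq> 0}. z n *\<^sub>R x n)"

definition block_seq :: "(nat \<Rightarrow> nat \<Rightarrow> real) \<Rightarrow> bool" where
  "block_seq v \<longleftrightarrow> (\<forall>k. v k \<in> c00 \<and> (\<exists>i. v k i \<noteq> 0)) \<and>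
     (\<forall>k i j. v k i \<noteq> 0 \<longrightarrow> v (Suc k) j \<noteq> 0 \<longrightarrow> i < j)"

text \<open>The dual of the completion E_X is exactly the space of
  linear functionals on the dense subspace c00 that are bounded for EX_norm
  (only their values on c00 matter).\<close>
definition EX_weakly_null :: "(nat \<Rightarrow> 'a::real_normed_vector) \<Rightarrow> (nat \<Rightarrow> nat \<Rightarrow> real) \<Rightarrow> bool" where
  "EX_weakly_null x v \<longleftrightarrow>
     (\<forall>\<phi> :: (nat \<Rightarrow> real) \<Rightarrow> real. \<forall>C.
        (\<forall>z\<in>c00. \<forall>w\<in>c00. \<phi> (\<lambda>n. z n + w n) = \<phi> z + \<phi> w) \<longrightarrow>
        (\<forall>z\<in>c00. \<forall>c. \<phi> (\<lambda>n. c * z n) = c * \<phi> z) \<longrightarrow> (\<forall>z\<in>c00. \<bar>\<phi> z\<bar> \<le> C * EX_norm x z) \<longrightarrow>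
        (\<lambda>k. \<phi> (v k)) \<longlonglongrightarrow> 0)"

definition weakly_null :: "(nat \<Rightarrow> 'a::real_normed_vector) \<Rightarrow> bool" where
  "weakly_null y \<longleftrightarrow> (\<forall>f :: 'a \<Rightarrow> real. bounded_linear f \<longrightarrow> (\<lambda>k. f (y k)) \<longlonglongrightarrow> 0)"

end

theory Submission
  imports Defs "HOL-Analysis.Analysis" "HOL-Library.Infinite_Set"
begin


lemma hahn_banach:
  fixes p :: "'v::real_vector \<Rightarrow> real" and f :: "'v \<Rightarrow> real"
  assumes p_add: "\<And>x y. p (x + y) \<le> p x + p y"
    and p_scale: "\<And>c x. c > 0 \<Longrightarrow> p (c *\<^sub>R x) = c * p x"
    and S: "subspace S"
    and f_add: "\<And>x y. x\<in>S \<Longrightarrow> y\<in>S \<Longrightarrow> f (x+y) = f x + f y"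
    and f_scale: "\<And>c x. x\<in>S \<Longrightarrow> f (c *\<^sub>R x) = c * f x"
    and f_le: "\<And>x. x\<in>S \<Longrightarrow> f x \<le> p x"
  shows "\<exists>F. linear F \<and> (\<forall>x\<in>S. F x = f x) \<and> (\<forall>x. F x \<le> p x)"
proof -
  define A where "A = {G. (\<forall>x a b. (x,a)\<in>G \<longrightarrow> (x,b)\<in>G \<longrightarrow> a=b) \<and> (\<forall>x\<in>S. (x, f x)\<in>G)
     \<and> (\<forall>x a y b. (x,a)\<in>G \<longrightarrow> (y,b)\<in>G \<longrightarrow> (x+y,a+b)\<in>G)
     \<and> (\<forall>x a c. (x,a)\<in>G \<longrightarrow> (c *\<^sub>R x, c*a)\<in>G) \<and> (\<forall>x a. (x,a)\<in>G \<longrightarrow> a \<le> p x)}"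
  define G0 where "G0 = {(x, f x)| x. x\<in>S}"
  have G0A: "G0 \<in> A"
    unfolding A_def G0_def using S f_add f_scale f_le
    by (auto simp: subspace_def)
  have "\<exists>M\<in>A. \<forall>X\<in>A. M \<subseteq> X \<longrightarrow> X = M"
  proof (rule Zorn_Lemma2, intro ballI)
    fix C assume C: "C \<in> chains A"
    show "\<exists>U\<in>A. \<forall>X\<in>C. X \<subseteq> U"
    proof (cases "C = {}")
      case True then show ?thesis using G0A by auto
    next
      case False
      have CA: "C \<subseteq> A" and ch: "\<And>G H. G\<in>C \<Longrightarrow> H\<in>C \<Longrightarrow> G \<subseteq> H \<or> H \<subseteq> G"
        using C by (auto simp: chains_def chain_subset_def)
      obtain G1 where G1: "G1 \<in> C" using False by auto
      have pair: "\<exists>K\<in>C. u \<in> K \<and> w \<in> K" if uC: "u \<in> \<Union>C" and wC: "w \<in> \<Union>C" for u w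
      proof -
        obtain G where "G\<in>C" "u\<in>G" using uC by blast
        moreover obtain H where "H\<in>C" "w\<in>H" using wC by blast
        ultimately show ?thesis using ch[of G H] by blast
      qed
      have "\<Union>C \<in> A"
        unfolding A_def
      proof (intro CollectI conjI allI impI ballI)
        fix x a b assume "(x,a)\<in>\<Union>C" "(x,b)\<in>\<Union>C"
        then obtain K where "K\<in>C" "(x,a)\<in>K" "(x,b)\<in>K" using pair by blast
        moreover have "K \<in> A" using CA `K\<in>C` by blast
        ultimately show "a = b" unfolding A_def by blast
      next
        fix x assume "x\<in>S"
        moreover have "G1 \<in> A" using CA G1 by blast
        ultimately show "(x, f x) \<in> \<Union>C" using G1 unfolding A_def by blast
      next
        fix x a y b assume "(x,a)\<in>\<Union>C" "(y,b)\<in>\<Union>C"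
        then obtain K where "K\<in>C" "(x,a)\<in>K" "(y,b)\<in>K" using pair by blast
        moreover have "K \<in> A" using CA `K\<in>C` by blast
        ultimately have "(x+y, a+b) \<in> K" unfolding A_def by blast
        then show "(x+y, a+b) \<in> \<Union>C" using `K\<in>C` by blast
      next
        fix x a c assume "(x,a)\<in>\<Union>C"
        then obtain K where "K\<in>C" "(x,a)\<in>K" by blast
        moreover have "K \<in> A" using CA `K\<in>C` by blast
        ultimately have "(c *\<^sub>R x, c*a) \<in> K" unfolding A_def by blast
        then show "(c *\<^sub>R x, c*a) \<in> \<Union>C" using `K\<in>C` by blast
      next
        fix x a assume "(x,a)\<in>\<Union>C"
        then obtain K where "K\<in>C" "(x,a)\<in>K" by blast
        moreover have "K \<in> A" using CA `K\<in>C` by blast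
        ultimately show "a \<le> p x" unfolding A_def by blast
      qed
      then show ?thesis by auto
    qed
  qed
  then obtain M where MA: "M \<in> A" and Mmax: "\<And>X. X\<in>A \<Longrightarrow> M \<subseteq> X \<Longrightarrow> X = M" by blast
  have Mfun: "\<And>x a b. (x,a)\<in>M \<Longrightarrow> (x,b)\<in>M \<Longrightarrow> a=b"
    and MS: "\<And>x. x\<in>S \<Longrightarrow> (x, f x)\<in>M"
    and Madd: "\<And>x a y b. (x,a)\<in>M \<Longrightarrow> (y,b)\<in>M \<Longrightarrow> (x+y,a+b)\<in>M"
    and Mscale: "\<And>x a c. (x,a)\<in>M \<Longrightarrow> (c *\<^sub>R x, c*a)\<in>M"
    and Mle: "\<And>x a. (x,a)\<in>M \<Longrightarrow> a \<le> p x"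
    using MA unfolding A_def by blast+
  have M0: "(0,0) \<in> M"
    using Mscale[OF MS[of 0], of 0] S by (simp add: subspace_0)
  have total: "\<forall>x. \<exists>a. (x,a)\<in>M"
  proof (rule ccontr)
    assume "\<not> ?thesis"
    then obtain x0 where x0: "\<And>a. (x0,a) \<notin> M" by blast
    define L where "L = {a - p (u - x0) | u a. (u,a)\<in>M}"
    have key: "a - p (u - x0) \<le> p (w + x0) - b" if "(u,a)\<in>M" "(w,b)\<in>M" for u a w b
    proof -
      have "a + b \<le> p (u + w)" using Mle[OF Madd[OF that]] .
      also have "u + w = (u - x0) + (w + x0)" by simp
      finally show ?thesis using p_add[of "u - x0" "w + x0"] by linarith
    qed
    define c where "c = Sup L"
    have Lne: "L \<noteq> {}" using M0 unfolding L_def by blast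
    have Lbdd: "bdd_above L" unfolding L_def bdd_above_def using key[OF _ M0] by blast
    have c_ge: "a - p (u - x0) \<le> c" if "(u,a)\<in>M" for u a
      unfolding c_def using that Lbdd by (auto intro!: cSup_upper simp: L_def)
    have c_le: "c \<le> p (w + x0) - b" if "(w,b)\<in>M" for w b
      unfolding c_def using that Lne key by (auto intro!: cSup_least simp: L_def)
    define M' where "M' = {(y + t *\<^sub>R x0, a + t*c) | y a t. (y,a)\<in>M}"
    have "M' \<in> A"
      unfolding A_def
    proof (intro CollectI conjI allI impI ballI)
      fix x a b assume "(x,a)\<in>M'" "(x,b)\<in>M'"
      then obtain y1 a1 t1 y2 a2 t2 where e: "x = y1 + t1 *\<^sub>R x0" "a = a1 + t1*c" "(y1,a1)\<in>M"
          "x = y2 + t2 *\<^sub>R x0" "b = a2 + t2*c" "(y2,a2)\<in>M"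
        unfolding M'_def by blast
      have "t1 = t2"
      proof (rule ccontr)
        assume ne: "t1 \<noteq> t2"
        have "(y1 + (-1) *\<^sub>R y2, a1 + (-1)*a2) \<in> M" using Madd[OF e(3) Mscale[OF e(6)]] .
        from Mscale[OF this, of "1/(t2 - t1)"]
        have "((1/(t2-t1)) *\<^sub>R (y1 - y2), (1/(t2-t1)) * (a1 - a2)) \<in> M" by simp
        moreover have "(1/(t2-t1)) *\<^sub>R (y1 - y2) = x0"
        proof -
          have "y1 - y2 = (t2 - t1) *\<^sub>R x0" using e(1) e(4)
            by (simp add: algebra_simps)
          then show ?thesis using ne by simp
        qed
        ultimately show False using x0 by metis
      qed
      then have "y1 = y2" using e by simp
      then show "a = b" using e Mfun `t1 = t2` by auto
    next
      fix x assume "x\<in>S" then show "(x, f x) \<in> M'"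
        unfolding M'_def using MS by force
    next
      fix x a y b assume "(x,a)\<in>M'" "(y,b)\<in>M'"
      then obtain y1 a1 t1 y2 a2 t2 where e: "x = y1 + t1 *\<^sub>R x0" "a = a1 + t1*c" "(y1,a1)\<in>M"
          "y = y2 + t2 *\<^sub>R x0" "b = a2 + t2*c" "(y2,a2)\<in>M"
        unfolding M'_def by blast
      have "x + y = (y1+y2) + (t1+t2) *\<^sub>R x0" "a + b = (a1+a2) + (t1+t2)*c"
        using e by (simp_all add: algebra_simps)
      then show "(x+y, a+b) \<in> M'" unfolding M'_def using Madd[OF e(3) e(6)] by blast
    next
      fix x a r assume "(x,a)\<in>M'"
      then obtain y1 a1 t1 where e: "x = y1 + t1 *\<^sub>R x0" "a = a1 + t1*c" "(y1,a1)\<in>M"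
        unfolding M'_def by blast
      have "r *\<^sub>R x = r *\<^sub>R y1 + (r*t1) *\<^sub>R x0" "r * a = r*a1 + (r*t1)*c"
        using e by (simp_all add: algebra_simps)
      then show "(r *\<^sub>R x, r*a) \<in> M'" unfolding M'_def using Mscale[OF e(3)] by blast
    next
      fix x a assume "(x,a)\<in>M'"
      then obtain y a1 t where e: "x = y + t *\<^sub>R x0" "a = a1 + t*c" "(y,a1)\<in>M"
        unfolding M'_def by blast
      show "a \<le> p x"
      proof (cases "t > 0")
        case True
        have "(inverse t *\<^sub>R y, inverse t * a1) \<in> M" using Mscale[OF e(3)] .
        from c_le[OF this] have "c \<le> p (inverse t *\<^sub>R y + x0) - inverse t * a1" .
        then have "t * c \<le> t * p (inverse t *\<^sub>R y + x0) - a1" using True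
          by (simp add: field_simps)
        also have "t * p (inverse t *\<^sub>R y + x0) = p (t *\<^sub>R (inverse t *\<^sub>R y + x0))"
          using p_scale[OF True] by simp
        also have "t *\<^sub>R (inverse t *\<^sub>R y + x0) = x" using True e(1) by (simp add: algebra_simps)
        finally show ?thesis using e by simp
      next
        case False
        show ?thesis
        proof (cases "t = 0")
          case True then show ?thesis using e Mle by simp
        next
          case False
          define s where "s = - t"
          have s: "s > 0" using False `\<not> t > 0` unfolding s_def by simp
          have "(inverse s *\<^sub>R y, inverse s * a1) \<in> M" using Mscale[OF e(3)] .
          from c_ge[OF this] have "inverse s * a1 - p (inverse s *\<^sub>R y - x0) \<le> c" .
          then have "a1 - s * p (inverse s *\<^sub>R y - x0) \<le> s * c" using s
            by (simp add: field_simps)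
          also have "s * p (inverse s *\<^sub>R y - x0) = p (s *\<^sub>R (inverse s *\<^sub>R y - x0))"
            using p_scale[OF s] by simp
          also have "s *\<^sub>R (inverse s *\<^sub>R y - x0) = x" using s e(1) by (simp add: algebra_simps s_def)
          finally show ?thesis using e s_def by simp
        qed
      qed
    qed
    moreover have "M \<subseteq> M'"
    proof
      fix z assume "z \<in> M"
      then obtain y a where "z = (y,a)" "(y,a)\<in>M" by (cases z) auto
      moreover have "(y + 0 *\<^sub>R x0, a + 0*c) \<in> M'" unfolding M'_def using `(y,a)\<in>M` by blast
      ultimately show "z \<in> M'" by simp
    qed
    ultimately have "M' = M" using Mmax by blast
    moreover have "(0 + 1 *\<^sub>R x0, 0 + 1*c) \<in> M'" unfolding M'_def using M0 by blast
    then have "(x0, c) \<in> M'" by simp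
    ultimately show False using x0 by blast
  qed
  define F where "F x = (THE a. (x,a)\<in>M)" for x
  have FM: "(x, F x) \<in> M" for x
    unfolding F_def using total Mfun by (metis theI)
  have Feq: "F x = a" if "(x,a)\<in>M" for x a using Mfun[OF FM that] .
  have "linear F"
    by (rule linearI) (auto intro!: Feq Madd FM Mscale)
  moreover have "\<forall>x\<in>S. F x = f x" using Feq MS by blast
  moreover have "\<forall>x. F x \<le> p x" using Mle FM by blast
  ultimately show ?thesis by blast
qed



lemma bcf_nat: "bounded (range (f :: nat \<Rightarrow> 'a::real_normed_vector)) \<Longrightarrow> f \<in> bcontfun"
  by (simp add: bcontfun_def)

lemma bcf_nat_normI: "(\<And>m. norm ((f :: nat \<Rightarrow> 'a::real_normed_vector) m) \<le> B) \<Longrightarrow> f \<in> bcontfun"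
  by (rule bcontfun_normI) auto

lemma bcf_sum_apply:
  fixes w :: "nat \<Rightarrow> (nat \<Rightarrow>\<^sub>C 'a::real_normed_vector)"
  shows "apply_bcontfun (\<Sum>j<J. w j) m = (\<Sum>j<J. apply_bcontfun (w j) m)"
  by (induction J) auto

lemma signsum_contra:
  fixes w :: "nat \<Rightarrow> (nat \<Rightarrow>\<^sub>C 'a::real_normed_vector)" and \<Phi> :: "(nat \<Rightarrow>\<^sub>C 'a) \<Rightarrow> real"
  assumes supp: "\<And>j m. m < lo j \<or> hi j < m \<Longrightarrow> apply_bcontfun (w j) m = 0"
    and disj: "\<And>j j'. j < j' \<Longrightarrow> hi j < lo j'"
    and bnd: "\<And>j m. norm (apply_bcontfun (w j) m) \<le> B"
    and lin: "linear \<Phi>"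
    and Phi_bd: "\<And>u. \<bar>\<Phi> u\<bar> \<le> C * norm u"
    and big: "\<And>j. \<bar>\<Phi> (w j)\<bar> \<ge> \<delta>" and dpos: "\<delta> > 0"
  shows False
proof -
  define s where "s j = sgn (\<Phi> (w j))" for j
  define W where "W J = (\<Sum>j<J. s j *\<^sub>R w j)" for J
  have B0: "0 \<le> B" using bnd[of 0 0] norm_ge_zero order_trans by blast
  have s_abs: "\<bar>s j\<bar> \<le> 1" for j unfolding s_def by (simp add: abs_sgn_eq)
  have normW: "norm (W J) \<le> B" for J
  proof (rule norm_bound)
    fix m
    have eq: "apply_bcontfun (W J) m = (\<Sum>j<J. s j *\<^sub>R apply_bcontfun (w j) m)"
      unfolding W_def by (simp add: bcf_sum_apply)
    show "norm (apply_bcontfun (W J) m) \<le> B"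
    proof (cases "\<exists>j0<J. apply_bcontfun (w j0) m \<noteq> 0")
      case False
      then show ?thesis using eq B0 by simp
    next
      case True
      then obtain j0 where j0: "j0 < J" "apply_bcontfun (w j0) m \<noteq> 0" by blast
      have m0: "lo j0 \<le> m" "m \<le> hi j0" using supp[of m j0] j0(2) by linarith+
      have other: "apply_bcontfun (w j) m = 0" if "j \<noteq> j0" for j
      proof (cases "j < j0")
        case True then have "hi j < lo j0" by (rule disj)
        then show ?thesis using m0 supp by auto
      next
        case False then have "j0 < j" using that by simp
        then have "hi j0 < lo j" by (rule disj)
        then show ?thesis using m0 supp by auto
      qed
      have "(\<Sum>j<J. s j *\<^sub>R apply_bcontfun (w j) m) = s j0 *\<^sub>R apply_bcontfun (w j0) m"
        using j0(1) other by (subst sum.remove[of _ j0]) (auto intro!: sum.neutral)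
      then have "norm (apply_bcontfun (W J) m) = \<bar>s j0\<bar> * norm (apply_bcontfun (w j0) m)"
        using eq by simp
      also have "\<dots> \<le> 1 * B" using s_abs bnd by (intro mult_mono) auto
      finally show ?thesis by simp
    qed
  qed
  have PhiW: "\<Phi> (W J) = (\<Sum>j<J. \<bar>\<Phi> (w j)\<bar>)" for J
    unfolding W_def s_def using lin
    by (simp add: linear_sum linear_scale abs_sgn[symmetric] mult.commute)
  have "real J * \<delta> \<le> C * B" for J
  proof -
    have "real J * \<delta> = (\<Sum>j<J. \<delta>)" by simp
    also have "\<dots> \<le> (\<Sum>j<J. \<bar>\<Phi> (w j)\<bar>)" using big by (intro sum_mono) auto
    also have "\<dots> = \<Phi> (W J)" using PhiW by simp
    also have "\<dots> \<le> C * norm (W J)" using Phi_bd[of "W J"] by simp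
    also have "\<dots> \<le> C * B"
    proof -
      have "C \<ge> 0" using Phi_bd[of "w 0"] big[of 0] dpos
        by (smt (verit) mult_nonpos_nonneg norm_ge_zero)
      then show ?thesis using normW by (simp add: mult_left_mono)
    qed
    finally show ?thesis .
  qed
  moreover obtain J :: nat where "C * B / \<delta> < real J" using reals_Archimedean2 by blast
  ultimately show False using dpos by (smt (verit) pos_divide_less_eq)
qed



definition psum :: "(nat \<Rightarrow> 'a::real_normed_vector) \<Rightarrow> (nat \<Rightarrow> real) \<Rightarrow> nat \<Rightarrow> 'a" where
  "psum x z m = (\<Sum>n\<le>m. z n *\<^sub>R x n)"

lemma c00_bound: "z \<in> c00 \<Longrightarrow> \<exists>K. \<forall>n. z n \<noteq> 0 \<longrightarrow> n \<le> K"
  unfolding c00_def using finite_nat_set_iff_bounded_le by auto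

lemma psum_stable: "(\<forall>n. z n \<noteq> 0 \<longrightarrow> n \<le> K) \<Longrightarrow> K \<le> m \<Longrightarrow> psum x z m = psum x z K"
  unfolding psum_def by (rule sum.mono_neutral_right) auto

lemma QX_eq: "(\<forall>n. z n \<noteq> 0 \<longrightarrow> n \<le> K) \<Longrightarrow> QX x z = psum x z K"
  unfolding psum_def QX_def by (rule sum.mono_neutral_left) auto

lemma psum_low: "(\<forall>n. z n \<noteq> 0 \<longrightarrow> a \<le> n) \<Longrightarrow> m < a \<Longrightarrow> psum x z m = 0"
  unfolding psum_def by (rule sum.neutral) (metis atMost_iff leD order.strict_trans1 scale_zero_left)

lemma psum_bounded: "z \<in> c00 \<Longrightarrow> bounded (range (psum x z))"
proof -
  assume "z \<in> c00"
  then obtain K where K: "\<forall>n. z n \<noteq> 0 \<longrightarrow> n \<le> K" using c00_bound by blast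
  have "range (psum x z) \<subseteq> psum x z ` {..K}"
  proof
    fix y assume "y \<in> range (psum x z)"
    then obtain m where m: "y = psum x z m" by blast
    show "y \<in> psum x z ` {..K}"
    proof (cases "K \<le> m")
      case True then show ?thesis using psum_stable[OF K True] m by auto
    next
      case False then show ?thesis using m by auto
    qed
  qed
  then show ?thesis by (meson bounded_subset finite_atMost finite_imageI finite_imp_bounded)
qed

lemma psum_add: "psum x (\<lambda>n. z n + w n) m = psum x z m + psum x w m"
  unfolding psum_def by (simp add: sum.distrib scaleR_add_left)

lemma psum_scale: "psum x (\<lambda>n. c * z n) m = c *\<^sub>R psum x z m"
  unfolding psum_def by (simp add: scaleR_sum_right)

lemma c00_add: "z \<in> c00 \<Longrightarrow> w \<in> c00 \<Longrightarrow> (\<lambda>n. z n + w n) \<in> c00"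
proof -
  assume a: "z \<in> c00" "w \<in> c00"
  have "{n. z n + w n \<noteq> 0} \<subseteq> {n. z n \<noteq> 0} \<union> {n. w n \<noteq> 0}" by auto
  then show ?thesis using a unfolding c00_def by (auto intro: finite_subset)
qed

lemma c00_scale: "z \<in> c00 \<Longrightarrow> (\<lambda>n. c * z n) \<in> c00"
  unfolding c00_def by (auto elim!: finite_subset[rotated])

definition TT :: "(nat \<Rightarrow> 'a::real_normed_vector) \<Rightarrow> (nat \<Rightarrow> real) \<Rightarrow> (nat \<Rightarrow>\<^sub>C 'a)" where
  "TT x z = Bcontfun (psum x z)"

lemma TT_apply: "z \<in> c00 \<Longrightarrow> apply_bcontfun (TT x z) = psum x z"
  unfolding TT_def by (rule Bcontfun_inverse) (simp add: bcf_nat psum_bounded)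

lemma TT_norm: "z \<in> c00 \<Longrightarrow> norm (TT x z) = EX_norm x z"
  unfolding norm_bcontfun_def dist_bcontfun.rep_eq EX_norm_def
  by (simp add: TT_apply psum_def)

lemma TT_add: "z \<in> c00 \<Longrightarrow> w \<in> c00 \<Longrightarrow> TT x (\<lambda>n. z n + w n) = TT x z + TT x w"
  by (rule bcontfun_eqI) (simp add: TT_apply c00_add psum_add)

lemma TT_scale: "z \<in> c00 \<Longrightarrow> TT x (\<lambda>n. c * z n) = c *\<^sub>R TT x z"
  by (rule bcontfun_eqI) (simp add: TT_apply c00_scale psum_scale)

definition cN :: "nat \<Rightarrow> 'a::real_normed_vector \<Rightarrow> (nat \<Rightarrow>\<^sub>C 'a)" where
  "cN N y = Bcontfun (\<lambda>m. if N \<le> m then y else 0)"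

lemma cN_apply: "apply_bcontfun (cN N y) m = (if N \<le> m then y else 0)"
proof -
  have "(\<lambda>m. if N \<le> m then y else 0) \<in> bcontfun"
    by (rule bcf_nat_normI[of _ "norm y"]) auto
  then show ?thesis unfolding cN_def by (simp add: Bcontfun_inverse)
qed

lemma cN_add: "cN N (y + z) = cN N y + cN N z"
  by (rule bcontfun_eqI) (simp add: cN_apply)

lemma cN_scale: "cN N (c *\<^sub>R y) = c *\<^sub>R cN N y"
  by (rule bcontfun_eqI) (simp add: cN_apply)

lemma cN_norm: "norm (cN N y) \<le> norm y"
  by (rule norm_bound) (simp add: cN_apply)

lemma block_trans:
  assumes "block_seq v" "k < k'" "v k i \<noteq> 0" "v k' j \<noteq> 0"
  shows "i < j"
proof -
  have "\<forall>j. v (Suc (k + d)) j \<noteq> 0 \<longrightarrow> i < j" for d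
  proof (induction d)
    case 0 then show ?case using assms(1,3) unfolding block_seq_def by auto
  next
    case (Suc d)
    obtain i' where "v (Suc (k + d)) i' \<noteq> 0" using assms(1) unfolding block_seq_def by blast
    then show ?case using Suc assms(1) unfolding block_seq_def
      by (metis add_Suc_right order.strict_trans)
  qed
  moreover obtain d where "k' = Suc (k + d)" using assms(2) less_iff_Suc_add by auto
  ultimately show ?thesis using assms(4) by blast
qed



theorem proposition18:
  fixes x :: "nat \<Rightarrow> 'a::banach"
    and v :: "nat \<Rightarrow> nat \<Rightarrow> real"
  assumes sep: "separable_space (euclidean :: 'a topology)"
    and nontriv: "\<exists>y::'a. y \<noteq> 0"
    and x_sphere: "\<forall>n. norm (x n) = 1"
    and x_dense: "sphere 0 1 \<subseteq> closure (range x)"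
    and block: "block_seq v"
    and bdd: "\<exists>M. \<forall>k. EX_norm x (v k) \<le> M"
    and Qnull: "weakly_null (\<lambda>k. QX x (v k))"
  shows "EX_weakly_null x v"
  unfolding EX_weakly_null_def
proof (intro allI impI)
  fix \<phi> :: "(nat \<Rightarrow> real) \<Rightarrow> real" and C :: real
  assume \<phi>add: "\<forall>z\<in>c00. \<forall>w\<in>c00. \<phi> (\<lambda>n. z n + w n) = \<phi> z + \<phi> w"
    and \<phi>scale: "\<forall>z\<in>c00. \<forall>c. \<phi> (\<lambda>n. c * z n) = c * \<phi> z"
    and \<phi>bd: "\<forall>z\<in>c00. \<bar>\<phi> z\<bar> \<le> C * EX_norm x z"
  define C' where "C' = \<bar>C\<bar>"
  have C'0: "C' \<ge> 0" unfolding C'_def by simp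
  have \<phi>bd': "\<bar>\<phi> z\<bar> \<le> C' * norm (TT x z)" if "z \<in> c00" for z
  proof -
    have "\<bar>\<phi> z\<bar> \<le> C * norm (TT x z)" using \<phi>bd that TT_norm[OF that, of x] by simp
    also have "\<dots> \<le> C' * norm (TT x z)" unfolding C'_def by (simp add: mult_right_mono)
    finally show ?thesis .
  qed
  have zc: "(\<lambda>n. 0) \<in> c00" unfolding c00_def by simp
  have TT0: "TT x (\<lambda>n. 0) = 0"
    using TT_scale[OF zc, of x 0] by simp
  define S where "S = TT x ` c00"
  have subS: "subspace S"
    unfolding subspace_def S_def
  proof (intro conjI ballI allI)
    show "0 \<in> TT x ` c00" using TT0 zc by (auto intro!: image_eqI[where x="\<lambda>n. 0"])
  next
    fix a b assume "a \<in> TT x ` c00" "b \<in> TT x ` c00"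
    then obtain z w where zw: "z\<in>c00" "w\<in>c00" "a = TT x z" "b = TT x w" by blast
    then have "a + b = TT x (\<lambda>n. z n + w n)" "(\<lambda>n. z n + w n) \<in> c00"
      using TT_add[OF zw(1,2), of x] c00_add[OF zw(1,2)] by auto
    then show "a + b \<in> TT x ` c00" by blast
  next
    fix c a assume "a \<in> TT x ` c00"
    then obtain z where z: "z\<in>c00" "a = TT x z" by blast
    then have "c *\<^sub>R a = TT x (\<lambda>n. c * z n)" "(\<lambda>n. c * z n) \<in> c00"
      using TT_scale[OF z(1), of x c] c00_scale[OF z(1)] by auto
    then show "c *\<^sub>R a \<in> TT x ` c00" by blast
  qed
  have wd: "\<phi> z = \<phi> w" if "z\<in>c00" "w\<in>c00" "TT x z = TT x w" for z w
  proof -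
    define w' where "w' = (\<lambda>n. (-1) * w n)"
    have w'c: "w' \<in> c00" unfolding w'_def using c00_scale that(2) by blast
    have dc: "(\<lambda>n. z n + w' n) \<in> c00" using c00_add[OF that(1) w'c] .
    have "TT x (\<lambda>n. z n + w' n) = TT x z + TT x w'" using TT_add[OF that(1) w'c] .
    also have "TT x w' = (-1) *\<^sub>R TT x w" unfolding w'_def using TT_scale[OF that(2)] by blast
    finally have "TT x (\<lambda>n. z n + w' n) = 0" using that(3) by simp
    then have "\<bar>\<phi> (\<lambda>n. z n + w' n)\<bar> \<le> 0" using \<phi>bd'[OF dc] by simp
    moreover have "\<phi> (\<lambda>n. z n + w' n) = \<phi> z + \<phi> w'"
      using \<phi>add that(1) w'c by blast
    moreover have "\<phi> w' = (-1) * \<phi> w" unfolding w'_def using \<phi>scale that(2) by blast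
    ultimately show ?thesis by simp
  qed
  define f where "f s = \<phi> (SOME z. z \<in> c00 \<and> TT x z = s)" for s
  have f_TT: "f (TT x z) = \<phi> z" if "z \<in> c00" for z
  proof -
    have "\<exists>z'. z' \<in> c00 \<and> TT x z' = TT x z" using that by blast
    from someI_ex[OF this] show ?thesis unfolding f_def using wd that by blast
  qed
  have "\<exists>F. linear F \<and> (\<forall>s\<in>S. F s = f s) \<and> (\<forall>s. F s \<le> C' * norm s)"
  proof (rule hahn_banach[OF _ _ subS])
    show "C' * norm (a + b) \<le> C' * norm a + C' * norm b" for a b :: "nat \<Rightarrow>\<^sub>C 'a"
      using mult_left_mono[OF norm_triangle_ineq[of a b] C'0] by (simp add: distrib_left)
    show "C' * norm (c *\<^sub>R a) = c * (C' * norm a)" if "c > 0" for c and a :: "nat \<Rightarrow>\<^sub>C 'a"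
      using that by simp
    show "f (a + b) = f a + f b" if ab: "a \<in> S" "b \<in> S" for a b
    proof -
      obtain z w where zw: "z\<in>c00" "w\<in>c00" "a = TT x z" "b = TT x w" using ab S_def by blast
      have "f (a + b) = f (TT x (\<lambda>n. z n + w n))" using TT_add[OF zw(1,2), of x] zw by simp
      also have "\<dots> = \<phi> z + \<phi> w" using f_TT[OF c00_add[OF zw(1,2)]] \<phi>add zw by simp
      finally show ?thesis using f_TT zw by simp
    qed
    show "f (c *\<^sub>R a) = c * f a" if aS: "a \<in> S" for a c
    proof -
      obtain z where z: "z\<in>c00" "a = TT x z" using aS S_def by blast
      have "f (c *\<^sub>R a) = f (TT x (\<lambda>n. c * z n))" using TT_scale[OF z(1), of x c] z by simp
      also have "\<dots> = c * \<phi> z" using f_TT[OF c00_scale[OF z(1)]] \<phi>scale z by simp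
      finally show ?thesis using f_TT z by simp
    qed
    show "f a \<le> C' * norm a" if aS: "a \<in> S" for a
    proof -
      obtain z where "z\<in>c00" "a = TT x z" using aS S_def by blast
      then show ?thesis using f_TT \<phi>bd' by fastforce
    qed
  qed
  then obtain \<Phi> where lin: "linear \<Phi>" and \<Phi>S: "\<forall>s\<in>S. \<Phi> s = f s"
    and \<Phi>le: "\<And>s. \<Phi> s \<le> C' * norm s" by blast
  have \<Phi>TT: "\<Phi> (TT x z) = \<phi> z" if "z \<in> c00" for z
    using \<Phi>S f_TT that S_def by auto
  have \<Phi>bd: "\<bar>\<Phi> s\<bar> \<le> C' * norm s" for s
    using \<Phi>le[of s] \<Phi>le[of "-s"] linear_neg[OF lin, of s] by simp
  obtain M where M: "\<And>k. EX_norm x (v k) \<le> M" using bdd by blast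
  have vc: "v k \<in> c00" for k using block unfolding block_seq_def by blast
  have vnz: "\<exists>i. v k i \<noteq> 0" for k using block unfolding block_seq_def by blast
  have vfin: "finite {i. v k i \<noteq> 0}" for k using vc[of k] unfolding c00_def by simp
  define a where "a k = (LEAST i. v k i \<noteq> 0)" for k
  define b where "b k = Max {i. v k i \<noteq> 0}" for k
  have a_le: "a k \<le> i" if "v k i \<noteq> 0" for k i unfolding a_def using that by (rule Least_le)
  have a_nz: "v k (a k) \<noteq> 0" for k unfolding a_def using vnz[of k] by (rule LeastI_ex)
  have b_ge: "i \<le> b k" if "v k i \<noteq> 0" for k i unfolding b_def using that vfin by simp
  have b_nz: "v k (b k) \<noteq> 0" for k
  proof -
    have "b k \<in> {i. v k i \<noteq> 0}" unfolding b_def using vfin vnz by (intro Max_in) auto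
    then show ?thesis by simp
  qed
  have ab: "b k < a k'" if "k < k'" for k k' using block_trans[OF block that b_nz a_nz] .
  have ab0: "a k \<le> b k" for k using a_le[OF b_nz] .
  have sm: "strict_mono a" unfolding strict_mono_def using ab ab0 le_less_trans by blast
  have ak: "k \<le> a k" for k using strict_mono_imp_increasing[OF sm] .
  have bk: "k \<le> b k" for k using ak[of k] ab0[of k] by simp
  define Q where "Q k = QX x (v k)" for k
  have Q_eq: "Q k = psum x (v k) (b k)" for k unfolding Q_def using b_ge by (intro QX_eq) auto
  have normT: "norm (TT x (v k)) \<le> M" for k using TT_norm[OF vc[of k], of x] M[of k] by simp
  have psum_le: "norm (psum x (v k) m) \<le> M" for k m
    using norm_bounded[of "TT x (v k)" m] normT[of k] TT_apply[OF vc[of k], of x] by simp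
  have M0: "0 \<le> M" using psum_le[of 0 0] norm_ge_zero order_trans by blast
  have normQ: "norm (Q k) \<le> M" for k using Q_eq psum_le by simp
  define u where "u k = TT x (v k) - cN (Suc (b k)) (Q k)" for k
  have u_apply: "apply_bcontfun (u k) m = (if b k < m then 0 else psum x (v k) m)" for k m
  proof (cases "b k < m")
    case True
    have "psum x (v k) m = psum x (v k) (b k)" using b_ge True by (intro psum_stable) auto
    then show ?thesis using True unfolding u_def by (simp add: cN_apply TT_apply[OF vc] Q_eq)
  next
    case False then show ?thesis unfolding u_def by (simp add: cN_apply TT_apply[OF vc])
  qed
  have u_supp: "apply_bcontfun (u k) m = 0" if "m < a k \<or> b k < m" for k m
    using that
  proof
    assume "m < a k"
    then show ?thesis using u_apply psum_low[of "v k" "a k" m x] a_le by auto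
  qed (simp add: u_apply)
  have u_bnd: "norm (apply_bcontfun (u k) m) \<le> M" for k m
    using u_apply psum_le M0 by simp
  have decomp: "\<phi> (v k) = \<Phi> (u k) + \<Phi> (cN (Suc (b k)) (Q k))" for k
    unfolding u_def using \<Phi>TT[OF vc[of k]] linear_diff[OF lin] by simp
  have claimB: "(\<lambda>k. \<Phi> (u k)) \<longlonglongrightarrow> 0"
  proof (rule ccontr)
    assume nc: "\<not> ?thesis"
    then obtain \<delta> where dpos: "\<delta> > 0" and inf: "\<forall>N. \<exists>k\<ge>N. \<delta> \<le> \<bar>\<Phi> (u k)\<bar>"
      unfolding LIMSEQ_iff by (force simp: not_less)
    have "infinite {k. \<delta> \<le> \<bar>\<Phi> (u k)\<bar>}" using inf infinite_nat_iff_unbounded_le by blast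
    then obtain r :: "nat \<Rightarrow> nat" where r: "strict_mono r" "\<And>n. \<delta> \<le> \<bar>\<Phi> (u (r n))\<bar>"
      using infinite_enumerate by blast
    show False
    proof (rule signsum_contra[of "a \<circ> r" "b \<circ> r" "u \<circ> r" M \<Phi> C' \<delta>])
      show "apply_bcontfun ((u \<circ> r) j) m = 0" if "m < (a \<circ> r) j \<or> (b \<circ> r) j < m" for j m
        using that u_supp by simp
      show "(b \<circ> r) j < (a \<circ> r) j'" if "j < j'" for j j'
        using ab r(1) that by (simp add: strict_mono_def)
    qed (use u_bnd lin \<Phi>bd r(2) dpos in auto)
  qed
  have cN_diff: "apply_bcontfun (cN N y - cN N' y) m = (if N \<le> m \<and> m < N' then y else 0)"
    if "N < N'" for N N' m and y :: 'a
    using that by (simp add: cN_apply)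
  have claimA: "\<exists>N0. \<forall>N\<ge>N0. \<forall>N'\<ge>N0. \<forall>y. \<bar>\<Phi> (cN N y) - \<Phi> (cN N' y)\<bar> \<le> \<delta> * norm y"
    if dpos: "\<delta> > 0" for \<delta>
  proof (rule ccontr)
    assume nc: "\<not> ?thesis"
    have "\<exists>t. N0 \<le> fst t \<and> fst t < fst (snd t) \<and> norm (snd (snd t)) = 1 \<and>
       \<delta> < \<bar>\<Phi> (cN (fst t) (snd (snd t))) - \<Phi> (cN (fst (snd t)) (snd (snd t)))\<bar>" for N0
    proof -
      obtain N N' y where NN: "N \<ge> N0" "N' \<ge> N0" and gt: "\<delta> * norm y < \<bar>\<Phi> (cN N y) - \<Phi> (cN N' y)\<bar>"
        using nc by (force simp: not_le)
      have yn: "y \<noteq> 0"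
      proof
        assume "y = 0"
        then have "cN N y = 0" "cN N' y = 0" using cN_scale[of N 0 y] cN_scale[of N' 0 y] by auto
        then show False using gt `y = 0` linear_0[OF lin] by simp
      qed
      define y' where "y' = inverse (norm y) *\<^sub>R y"
      have ny': "norm y' = 1" unfolding y'_def using yn by simp
      have sc: "\<Phi> (cN K y') = inverse (norm y) * \<Phi> (cN K y)" for K
        unfolding y'_def cN_scale linear_scale[OF lin] by simp
      have gt': "\<delta> < \<bar>\<Phi> (cN N y') - \<Phi> (cN N' y')\<bar>"
      proof -
        have "\<bar>\<Phi> (cN N y') - \<Phi> (cN N' y')\<bar> = inverse (norm y) * \<bar>\<Phi> (cN N y) - \<Phi> (cN N' y)\<bar>"
          using sc yn by (simp add: right_diff_distrib[symmetric] abs_mult)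
        moreover have "\<delta> < inverse (norm y) * \<bar>\<Phi> (cN N y) - \<Phi> (cN N' y)\<bar>"
          using gt yn by (simp add: field_simps)
        ultimately show ?thesis by simp
      qed
      have "N \<noteq> N'" using gt' dpos by auto
      then show ?thesis
      proof (cases "N < N'")
        case True then show ?thesis using NN ny' gt' by (intro exI[of _ "(N, N', y')"]) simp
      next
        case False then have "N' < N" using `N \<noteq> N'` by simp
        then show ?thesis using NN ny' gt' by (intro exI[of _ "(N', N, y')"]) (simp add: abs_minus_commute)
      qed
    qed
    then obtain G where G: "\<And>N0. N0 \<le> fst (G N0) \<and> fst (G N0) < fst (snd (G N0)) \<and> norm (snd (snd (G N0))) = 1 \<and>
       \<delta> < \<bar>\<Phi> (cN (fst (G N0)) (snd (snd (G N0)))) - \<Phi> (cN (fst (snd (G N0))) (snd (snd (G N0))))\<bar>"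
      by metis
    define s where "s = rec_nat 0 (\<lambda>_ p. fst (snd (G p)))"
    have s0: "s 0 = 0" and sS: "s (Suc j) = fst (snd (G (s j)))" for j unfolding s_def by simp_all
    define lo where "lo j = fst (G (s j))" for j
    define hi where "hi j = s (Suc j) - 1" for j
    define y where "y j = snd (snd (G (s j)))" for j
    define w where "w j = cN (lo j) (y j) - cN (s (Suc j)) (y j)" for j
    have lohi: "s j \<le> lo j" "lo j < s (Suc j)" for j unfolding lo_def sS using G by auto
    have smono: "s j \<le> s j'" if "j \<le> j'" for j j'
      using lift_Suc_mono_le[of s, OF _ that] lohi by (meson le_trans less_imp_le)
    have w_apply: "apply_bcontfun (w j) m = (if lo j \<le> m \<and> m < s (Suc j) then y j else 0)" for j m
      unfolding w_def using cN_diff lohi by blast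
    show False
    proof (rule signsum_contra[of lo hi w 1 \<Phi> C' \<delta>])
      show "apply_bcontfun (w j) m = 0" if "m < lo j \<or> hi j < m" for j m
        using that w_apply unfolding hi_def by auto
      show "hi j < lo j'" if "j < j'" for j j'
      proof -
        have "s (Suc j) \<le> s j'" using smono that by simp
        then show ?thesis unfolding hi_def using lohi[of j] lohi[of j'] by linarith
      qed
      show "norm (apply_bcontfun (w j) m) \<le> 1" for j m
        using w_apply G unfolding y_def by simp
      show "\<delta> \<le> \<bar>\<Phi> (w j)\<bar>" for j
        using G[of "s j"] unfolding w_def linear_diff[OF lin] lo_def y_def sS by simp
    qed (use lin \<Phi>bd dpos in auto)
  qed
  have claimC: "(\<lambda>k. \<Phi> (cN (Suc (b k)) (Q k))) \<longlonglongrightarrow> 0"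
  proof (rule LIMSEQ_I)
    fix r :: real assume rpos: "0 < r"
    define \<delta> where "\<delta> = r / (2 * (M + 1))"
    have dpos: "\<delta> > 0" unfolding \<delta>_def using rpos M0 by simp
    obtain N0 where N0: "\<And>N N' y. N \<ge> N0 \<Longrightarrow> N' \<ge> N0 \<Longrightarrow> \<bar>\<Phi> (cN N y) - \<Phi> (cN N' y)\<bar> \<le> \<delta> * norm y"
      using claimA[OF dpos] by blast
    have bl: "bounded_linear (\<lambda>y. \<Phi> (cN N0 y))"
    proof (rule bounded_linear_intro[of _ C'])
      show "\<Phi> (cN N0 (p + q)) = \<Phi> (cN N0 p) + \<Phi> (cN N0 q)" for p q
        by (simp add: cN_add linear_add[OF lin])
      show "\<Phi> (cN N0 (c *\<^sub>R p)) = c *\<^sub>R \<Phi> (cN N0 p)" for c p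
        by (simp add: cN_scale linear_scale[OF lin])
      show "norm (\<Phi> (cN N0 p)) \<le> norm p * C'" for p
        using \<Phi>bd[of "cN N0 p"] mult_left_mono[OF cN_norm[of N0 p] C'0] by (simp add: mult.commute)
    qed
    have "(\<lambda>k. \<Phi> (cN N0 (Q k))) \<longlonglongrightarrow> 0"
      using Qnull bl unfolding weakly_null_def Q_def by blast
    then obtain no where no: "\<And>k. k \<ge> no \<Longrightarrow> \<bar>\<Phi> (cN N0 (Q k))\<bar> < r / 2"
      using LIMSEQ_D[of _ 0 "r/2"] rpos by (metis diff_zero half_gt_zero real_norm_def)
    show "\<exists>no. \<forall>k\<ge>no. norm (\<Phi> (cN (Suc (b k)) (Q k)) - 0) < r"
    proof (intro exI allI impI)
      fix k assume k: "max no N0 \<le> k"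
      have "\<bar>\<Phi> (cN (Suc (b k)) (Q k)) - \<Phi> (cN N0 (Q k))\<bar> \<le> \<delta> * norm (Q k)"
        using N0 bk[of k] k by simp
      also have "\<dots> \<le> \<delta> * M" using normQ dpos by (simp add: mult_left_mono)
      also have "\<dots> < r / 2"
      proof -
        have "\<delta> * M = r * M / (2 * (M + 1))" unfolding \<delta>_def by simp
        also have "\<dots> < r / 2" using rpos M0 by (simp add: field_simps)
        finally show ?thesis .
      qed
      finally have "\<bar>\<Phi> (cN (Suc (b k)) (Q k)) - \<Phi> (cN N0 (Q k))\<bar> < r / 2" .
      then show "norm (\<Phi> (cN (Suc (b k)) (Q k)) - 0) < r" using no[of k] k by simp (smt (verit))
    qed
  qed
  show "(\<lambda>k. \<phi> (v k)) \<longlonglongrightarrow> 0"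
    unfolding decomp using tendsto_add_zero[OF claimB claimC] .
qed

end
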